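(* Let $Q$ be a state of a medium, and let $G$ be the directed graph whose vertices are the states of the medium, with an arc from $S$ to $S'$ whenever $St=S'\neq S$ for some token $t$ belonging to the content $\hat Q$ of $Q$. Then $Q$ is the unique sink of $G$.
   Context: A medium consists of a finite set of states and a set of tokens, each token $t$ acting as a function on states, written $S\mapsto St$. Tokens concatenate into messages (words); $Sw$ denotes the state obtained by applying the tokens of $w$ successively to $S$. A token $t$ has a reverse $\tilde t$ if for any two distinct states $S\neq Q$, $St=Q$ iff $Q\tilde t=S$. A message is inconsistent if it contains some token together with its reverse, and consistent otherwise. A message $w$ is vacuous if for each token $t$ it contains equally many copies of $t$ and $\tilde t$. A token $t$ is effective for $S$ if $St\neq S$; a message is stepwise effective for $S$ if each successive token is effective for the state it is applied to. The axioms of a medium are: (1) each token has a unique reverse; (2) for any two distinct states $S,Q$ there is a consistent message $w$ with $Sw=Q$; (3) if $w$ is stepwise effective for $S$, then $Sw=S$ iff $w$ is vacuous; (4) if $Sw=Qz$, $w$ is stepwise effective for $S$, $z$ is stepwise effective for $Q$, and both $w,z$ are consistent, then $wz$ is consistent. A straight path from $S$ to $Sw$ is a consistent message $w$ that is stepwise effective for $S$. The content $\hat Q$ of a state $Q$ is the set of all tokens occurring in messages $w$ such that $Sw=Q$ is a straight path for some state $S$. (For every token $t$, exactly one of $t,\tilde t$ belongs to $\hat Q$, so $\hat Q$ and its complement form an orientation, the content orientation of $Q$.) *)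

theory Defs
  imports Main
begin

definition is_reverse :: "('s \<Rightarrow> 's) \<Rightarrow> ('s \<Rightarrow> 's) \<Rightarrow> bool" where
  "is_reverse t u \<longleftrightarrow> (\<forall>S Q. S \<noteq> Q \<longrightarrow> (t S = Q \<longleftrightarrow> u Q = S))"

definition apply_msg :: "'s \<Rightarrow> ('s \<Rightarrow> 's) list \<Rightarrow> 's" where
  "apply_msg S w = fold (\<lambda>t X. t X) w S"

definition consistent :: "('s \<Rightarrow> 's) set \<Rightarrow> ('s \<Rightarrow> 's) list \<Rightarrow> bool" where
  "consistent T w \<longleftrightarrow> \<not> (\<exists>t\<in>set w. \<exists>u\<in>set w. u \<in> T \<and> is_reverse t u)"

definition vacuous :: "('s \<Rightarrow> 's) set \<Rightarrow> ('s \<Rightarrow> 's) list \<Rightarrow> bool" where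
  "vacuous T w \<longleftrightarrow> (\<forall>t\<in>T. \<forall>u\<in>T. is_reverse t u \<longrightarrow> count_list w t = count_list w u)"

fun stepwise_effective :: "'s \<Rightarrow> ('s \<Rightarrow> 's) list \<Rightarrow> bool" where
  "stepwise_effective S [] = True"
| "stepwise_effective S (t # w) = (t S \<noteq> S \<and> stepwise_effective (t S) w)"

definition medium :: "('s::finite \<Rightarrow> 's) set \<Rightarrow> bool" where
  "medium T \<longleftrightarrow>
     (\<forall>t\<in>T. \<exists>!u. u \<in> T \<and> is_reverse t u)
   \<and> (\<forall>S Q. S \<noteq> Q \<longrightarrow> (\<exists>w\<in>lists T. consistent T w \<and> apply_msg S w = Q))
   \<and> (\<forall>S w. w \<in> lists T \<longrightarrow> stepwise_effective S w \<longrightarrow>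
          (apply_msg S w = S \<longleftrightarrow> vacuous T w))
   \<and> (\<forall>S Q w z. w \<in> lists T \<longrightarrow> z \<in> lists T \<longrightarrow> apply_msg S w = apply_msg Q z \<longrightarrow>
          stepwise_effective S w \<longrightarrow> stepwise_effective Q z \<longrightarrow>
          consistent T w \<longrightarrow> consistent T z \<longrightarrow> consistent T (w @ z))"

definition straight_path :: "('s \<Rightarrow> 's) set \<Rightarrow> 's \<Rightarrow> ('s \<Rightarrow> 's) list \<Rightarrow> bool" where
  "straight_path T S w \<longleftrightarrow> w \<in> lists T \<and> consistent T w \<and> stepwise_effective S w"

definition content :: "('s \<Rightarrow> 's) set \<Rightarrow> 's \<Rightarrow> ('s \<Rightarrow> 's) set" where
  "content T Q = {t. \<exists>S w. straight_path T S w \<and> apply_msg S w = Q \<and> t \<in> set w}"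

definition content_arc :: "('s \<Rightarrow> 's) set \<Rightarrow> 's \<Rightarrow> 's \<Rightarrow> 's \<Rightarrow> bool" where
  "content_arc T Q S S' \<longleftrightarrow> (\<exists>t\<in>content T Q. t S = S' \<and> S' \<noteq> S)"

definition is_sink :: "('v \<Rightarrow> 'v \<Rightarrow> bool) \<Rightarrow> 'v \<Rightarrow> bool" where
  "is_sink arc v \<longleftrightarrow> (\<forall>v'. \<not> arc v v')"

end

theory Submission
  imports Defs
begin

lemma am_nil[simp]: "apply_msg S [] = S" by (simp add: apply_msg_def)
lemma am_cons[simp]: "apply_msg S (t#w) = apply_msg (t S) w" by (simp add: apply_msg_def)
lemma am_app[simp]: "apply_msg S (w@z) = apply_msg (apply_msg S w) z" by (simp add: apply_msg_def)

lemma se_app: "stepwise_effective S (w@z) = (stepwise_effective S w \<and> stepwise_effective (apply_msg S w) z)"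
  by (induction w arbitrary: S) auto

lemma cons_mono: "consistent T w \<Longrightarrow> set v \<subseteq> set w \<Longrightarrow> consistent T v"
  unfolding consistent_def by blast

lemma rev_sym: "is_reverse t u \<Longrightarrow> is_reverse u t"
  unfolding is_reverse_def by metis

lemma filt: "\<exists>w'. set w' \<subseteq> set w \<and> stepwise_effective S w' \<and> apply_msg S w' = apply_msg S w"
proof (induction w arbitrary: S)
  case Nil then show ?case by auto
next
  case (Cons t w)
  show ?case
  proof (cases "t S = S")
    case True
    then obtain w' where "set w' \<subseteq> set w" "stepwise_effective S w'" "apply_msg S w' = apply_msg (t S) w"
      using Cons.IH[of S] by auto
    then show ?thesis by auto
  next
    case False
    then obtain w' where "set w' \<subseteq> set w" "stepwise_effective (t S) w'" "apply_msg (t S) w' = apply_msg (t S) w"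
      using Cons.IH[of "t S"] by auto
    then show ?thesis using False by (intro exI[of _ "t#w'"]) auto
  qed
qed

theorem mainTheorem2:
  fixes T :: "('s::finite \<Rightarrow> 's) set" and Q :: 's
  assumes "medium T"
  shows "is_sink (content_arc T Q) Q \<and> (\<forall>S. is_sink (content_arc T Q) S \<longrightarrow> S = Q)"
proof
  have MM: "medium T" by (rule assms)
  have M1: "\<forall>t\<in>T. \<exists>!u. u \<in> T \<and> is_reverse t u" using MM unfolding medium_def by (rule conjunct1)
  have M2: "\<forall>S Q. S \<noteq> Q \<longrightarrow> (\<exists>w\<in>lists T. consistent T w \<and> apply_msg S w = Q)" using MM unfolding medium_def by (rule conjunct1[OF conjunct2])
  have A4: "\<forall>S Q w z. w \<in> lists T \<longrightarrow> z \<in> lists T \<longrightarrow> apply_msg S w = apply_msg Q z \<longrightarrow>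
          stepwise_effective S w \<longrightarrow> stepwise_effective Q z \<longrightarrow>
          consistent T w \<longrightarrow> consistent T z \<longrightarrow> consistent T (w @ z)" using MM unfolding medium_def by (rule conjunct2[OF conjunct2[OF conjunct2]])
  show "is_sink (content_arc T Q) Q"
    unfolding is_sink_def content_arc_def
  proof (intro allI notI)
    fix V assume "\<exists>t\<in>content T Q. t Q = V \<and> V \<noteq> Q"
    then obtain t where tc: "t \<in> content T Q" and tQ: "t Q = V" "V \<noteq> Q" by blast
    from tc obtain S w where sp: "straight_path T S w" "apply_msg S w = Q" "t \<in> set w"
      unfolding content_def by blast
    from sp(3) obtain a b where w: "w = a @ t # b" by (meson split_list)
    have wT: "w \<in> lists T" and cw: "consistent T w" and sw: "stepwise_effective S w"
      using sp(1) unfolding straight_path_def by auto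
    have tT: "t \<in> T" using wT w by auto
    obtain u where uT: "u \<in> T" and ru: "is_reverse t u" using M1 tT by blast
    have uV: "u V = Q" using ru[unfolded is_reverse_def, rule_format, of Q V] tQ by auto
    have nuu: "\<not> is_reverse u u"
    proof
      assume "is_reverse u u"
      moreover have "is_reverse u t" using rev_sym[OF ru] .
      moreover have "\<exists>!x. x \<in> T \<and> is_reverse u x" using M1 uT by blast
      ultimately have "u = t" using uT tT by blast
      then show False using cw sp(3) ru uT unfolding consistent_def by blast
    qed
    let ?X = "apply_msg S a"
    have s1: "stepwise_effective ?X (t#b)" using sw unfolding w se_app by simp
    have e1: "apply_msg ?X (t#b) = Q" using sp(2) w by simp
    have c1: "consistent T (t#b)" by (rule cons_mono[OF cw]) (auto simp: w)
    have c2: "consistent T [u]" using nuu unfolding consistent_def by auto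
    have s2: "stepwise_effective V [u]" using uV tQ by auto
    have l1: "t#b \<in> lists T" using wT w by auto
    have l2: "[u] \<in> lists T" using uT by simp
    have e2: "apply_msg ?X (t#b) = apply_msg V [u]" using e1 uV by simp
    have "consistent T ((t#b) @ [u])"
      using A4[rule_format, OF l1 l2 e2 s1 s2 c1 c2] .
    then show False using ru uT unfolding consistent_def by auto
  qed
  show "\<forall>S. is_sink (content_arc T Q) S \<longrightarrow> S = Q"
  proof (intro allI impI)
    fix S assume sk: "is_sink (content_arc T Q) S"
    show "S = Q"
    proof (rule ccontr)
      assume "S \<noteq> Q"
      have "\<exists>w\<in>lists T. consistent T w \<and> apply_msg S w = Q" using M2 \<open>S \<noteq> Q\<close> by simp
      then obtain w where wT: "w \<in> lists T" and cw: "consistent T w" and ew: "apply_msg S w = Q"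
        by (elim bexE conjE)
      obtain w' where w': "set w' \<subseteq> set w" "stepwise_effective S w'" "apply_msg S w' = apply_msg S w"
        using filt[of w S] by (elim exE conjE)
      have "w' \<noteq> []" using w' ew \<open>S \<noteq> Q\<close> by auto
      then obtain t v where tv: "w' = t # v" by (cases w') auto
      have "straight_path T S w'" unfolding straight_path_def
      proof (intro conjI)
        show "w' \<in> lists T" using w'(1) wT by auto
        show "consistent T w'" using cons_mono[OF cw w'(1)] .
        show "stepwise_effective S w'" using w'(2) .
      qed
      moreover have "apply_msg S w' = Q" using w'(3) ew by simp
      ultimately have "t \<in> content T Q" unfolding content_def using tv by (intro CollectI exI[of _ S] exI[of _ w']) simp
      moreover have "t S \<noteq> S" using w'(2) tv by simp
      ultimately have "content_arc T Q S (t S)" unfolding content_arc_def by blast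
      then show False using sk unfolding is_sink_def by blast
    qed
  qed
qed

end
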